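(* Let $\Pi_2$ be a PARITY$_2$ program. Then there is a canonical program $\Pi_2'$ with $var(\Pi_2')\subseteq\{x_1,x_2\}$ and $Ans(\Pi_2')=$ PARITY$_2$ $=\{\{x_1\},\{x_2\}\}$, such that $Ans(\Pi_2')$ equals the set of models (subsets of $\{x_1,x_2\}$) of $Comp(\Pi_2')$, and $|\Pi_2'|\le|\Pi_2|$.
   Context: A rule element is one of $\top$, $\bot$, $x$, $not\ x$, $not\ not\ x$, where $x$ is a variable. A (canonical) rule is $H\leftarrow B$ with $H$ a variable or $\bot$ and $B$ a finite set of rule elements; a canonical program is a finite set of rules. For a set of variables $I$: $I\models\top$; $I\not\models\bot$; $I\models x$ iff $I\models not\ not\ x$ iff $x\in I$; $I\models not\ x$ iff $x\notin I$; $I\models B$ iff $I$ satisfies every element of $B$; $I$ is closed under $H\leftarrow B$ if $I\models B$ implies $I\models H$. The reduct $\Pi^I$ replaces $not\ not\ x$ by $\top$ if $x\in I$ else $\bot$, and $not\ x$ by $\top$ if $x\notin I$ else $\bot$; $I$ is an answer set of $\Pi$ if $I$ is the least set closed under all rules of $\Pi^I$; $Ans(\Pi)$ is the set of answer sets; $var(\Pi)$ is the set of variables occurring in $\Pi$; $|\Pi|$ is the number of rules. Strings $w\in\{0,1\}^n$ are identified with $\{x_i:w_i=1\}$; PARITY$_n$ is the set of strings in $\{0,1\}^n$ with an odd number of 1's; a PARITY$_n$ program is a canonical program $\Pi$ with $var(\Pi)=\{x_1,\dots,x_n\}$ and $Ans(\Pi)=$ PARITY$_n$. Completion (over signature $\{x_1,\dots,x_n\}$):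 for a body $B$, $\tilde B$ is the conjunction of its elements with $not$ read as $\neg$. $Comp(\Pi)$ is the conjunction of: for each $x_i$, $x_i\leftrightarrow(\tilde B_1\vee\dots\vee\tilde B_m)$ where $x_i\leftarrow B_1,\dots,x_i\leftarrow B_m$ are all rules with head $x_i$ (empty disjunction $=\bot$); and for each rule $\bot\leftarrow B$, the formula $\neg\tilde B$. *)

theory Defs
  imports Main
begin

text \<open>Variables x_i are represented by their index i :: nat.
  Rule elements: top, bot, x, not x, not not x.\<close>
datatype elem = ETop | EBot | EPos nat | ENot nat | ENotNot nat

text \<open>A rule H <- B: head None stands for bot, Some x for the variable x.\<close>
type_synonym rule = "nat option \<times> elem set"
type_synonym program = "rule set"

definition canonical_program :: "program \<Rightarrow> bool" where
  "canonical_program P \<longleftrightarrow> finite P \<and> (\<forall>r\<in>P. finite (snd r))"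

fun elem_vars :: "elem \<Rightarrow> nat set" where
  "elem_vars ETop = {}" | "elem_vars EBot = {}" | "elem_vars (EPos x) = {x}"
| "elem_vars (ENot x) = {x}" | "elem_vars (ENotNot x) = {x}"

definition head_vars :: "nat option \<Rightarrow> nat set" where
  "head_vars h = (case h of None \<Rightarrow> {} | Some x \<Rightarrow> {x})"

definition var :: "program \<Rightarrow> nat set" where
  "var P = (\<Union>r\<in>P. head_vars (fst r) \<union> (\<Union>e\<in>snd r. elem_vars e))"

fun sat_elem :: "nat set \<Rightarrow> elem \<Rightarrow> bool" where
  "sat_elem I ETop = True" | "sat_elem I EBot = False"
| "sat_elem I (EPos x) = (x \<in> I)" | "sat_elem I (ENot x) = (x \<notin> I)"
| "sat_elem I (ENotNot x) = (x \<in> I)"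

definition sat_body :: "nat set \<Rightarrow> elem set \<Rightarrow> bool" where
  "sat_body I B \<longleftrightarrow> (\<forall>e\<in>B. sat_elem I e)"

definition sat_head :: "nat set \<Rightarrow> nat option \<Rightarrow> bool" where
  "sat_head I h = (case h of None \<Rightarrow> False | Some x \<Rightarrow> x \<in> I)"

definition closed_under :: "nat set \<Rightarrow> rule \<Rightarrow> bool" where
  "closed_under I r \<longleftrightarrow> (sat_body I (snd r) \<longrightarrow> sat_head I (fst r))"

fun reduct_elem :: "nat set \<Rightarrow> elem \<Rightarrow> elem" where
  "reduct_elem I (ENotNot x) = (if x \<in> I then ETop else EBot)"
| "reduct_elem I (ENot x) = (if x \<notin> I then ETop else EBot)"
| "reduct_elem I e = e"

definition reduct :: "program \<Rightarrow> nat set \<Rightarrow> program" where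
  "reduct P I = (\<lambda>(h, B). (h, reduct_elem I ` B)) ` P"

definition answer_set :: "program \<Rightarrow> nat set \<Rightarrow> bool" where
  "answer_set P I \<longleftrightarrow>
     (\<forall>r\<in>reduct P I. closed_under I r) \<and>
     (\<forall>J. (\<forall>r\<in>reduct P I. closed_under J r) \<longrightarrow> I \<subseteq> J)"

definition Ans :: "program \<Rightarrow> nat set set" where
  "Ans P = {I. answer_set P I}"

definition PARITY :: "nat \<Rightarrow> nat set set" where
  "PARITY n = {I. I \<subseteq> {1..n} \<and> odd (card I)}"

definition parity_program :: "nat \<Rightarrow> program \<Rightarrow> bool" where
  "parity_program n P \<longleftrightarrow> canonical_program P \<and> var P = {1..n} \<and> Ans P = PARITY n"

fun cl_elem :: "nat set \<Rightarrow> elem \<Rightarrow> bool" where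
  "cl_elem I ETop = True" | "cl_elem I EBot = False"
| "cl_elem I (EPos x) = (x \<in> I)" | "cl_elem I (ENot x) = (\<not> (x \<in> I))"
| "cl_elem I (ENotNot x) = (\<not> \<not> (x \<in> I))"

definition cl_body :: "nat set \<Rightarrow> elem set \<Rightarrow> bool" where
  "cl_body I B \<longleftrightarrow> (\<forall>e\<in>B. cl_elem I e)"

text \<open>I is a model of Comp(P) over the signature S: completion equivalences for each
  x in S, and negated bodies for each constraint.\<close>
definition comp_model :: "nat set \<Rightarrow> program \<Rightarrow> nat set \<Rightarrow> bool" where
  "comp_model S P I \<longleftrightarrow>
     (\<forall>x\<in>S. (x \<in> I) \<longleftrightarrow> (\<exists>B. (Some x, B) \<in> P \<and> cl_body I B)) \<and>
     (\<forall>B. (None, B) \<in> P \<longrightarrow> \<not> cl_body I B)"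

end

theory Submission
  imports Defs
begin

lemma sat_mono_red: "sat_elem (I - {x}) (reduct_elem K e) \<Longrightarrow> sat_elem I (reduct_elem K e)"
  by (cases e) (auto split: if_splits)

lemma head_exists:
  assumes "answer_set P I" "x \<in> I"
  shows "\<exists>B. (Some x, B) \<in> P"
proof (rule ccontr)
  assume nh: "\<not> ?thesis"
  have "\<forall>r\<in>reduct P I. closed_under (I - {x}) r"
  proof
    fix r assume r: "r \<in> reduct P I"
    then obtain h B where hB: "(h, B) \<in> P" "r = (h, reduct_elem I ` B)"
      unfolding reduct_def by auto
    have cI: "closed_under I r" using assms(1) r unfolding answer_set_def by blast
    show "closed_under (I - {x}) r"
      unfolding closed_under_def
    proof
      assume sb: "sat_body (I - {x}) (snd r)"
      have "\<forall>e\<in>B. sat_elem (I - {x}) (reduct_elem I e)"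
        using sb hB(2) unfolding sat_body_def by simp
      hence "\<forall>e\<in>B. sat_elem I (reduct_elem I e)" using sat_mono_red by blast
      hence "sat_body I (snd r)" using hB(2) unfolding sat_body_def by simp
      hence "sat_head I (fst r)" using cI unfolding closed_under_def by auto
      moreover have "fst r \<noteq> Some x" using nh hB by (cases h) auto
      ultimately show "sat_head (I - {x}) (fst r)"
        unfolding sat_head_def by (auto split: option.splits)
    qed
  qed
  hence "I \<subseteq> I - {x}" using assms(1) unfolding answer_set_def by blast
  thus False using assms(2) by auto
qed

lemma sub12: "(I::nat set) \<subseteq> {1,2} \<Longrightarrow> I = {} \<or> I = {1} \<or> I = {2} \<or> I = {1,2}"
  by (cases "1 \<in> I"; cases "2 \<in> I") auto

lemma par_aux: "I \<subseteq> {1::nat, 2} \<and> odd (card I) \<Longrightarrow> I \<in> {{1}, {2}}"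
proof -
  assume a: "I \<subseteq> {1::nat, 2} \<and> odd (card I)"
  hence "I = {} \<or> I = {1} \<or> I = {2} \<or> I = {1,2}" using sub12 by blast
  moreover have "card {1::nat,2} = 2" by simp
  ultimately show ?thesis using a by (elim disjE) simp_all
qed

lemma parity2: "PARITY 2 = {{1}, {2}}"
proof -
  have e: "{1::nat..2} = {1,2}" by (auto simp: numeral_2_eq_2)
  show ?thesis unfolding PARITY_def e
  proof (intro set_eqI iffI)
    fix I assume "I \<in> {I. I \<subseteq> {1::nat, 2} \<and> odd (card I)}"
    thus "I \<in> {{1}, {2}}" using par_aux by blast
  next
    fix I :: "nat set" assume "I \<in> {{1}, {2}}"
    thus "I \<in> {I. I \<subseteq> {1::nat, 2} \<and> odd (card I)}" by (elim insertE) simp_all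
  qed
qed

definition Q :: program where
  "Q = {(Some 1, {ENot 2}), (Some 2, {ENot 1})}"

lemma redQ: "reduct Q I = {(Some 1, {if 2 \<notin> I then ETop else EBot}), (Some 2, {if 1 \<notin> I then ETop else EBot})}"
  by (simp add: reduct_def Q_def)

lemma AnsQ_iff: "answer_set Q I \<longleftrightarrow> I = {1} \<or> I = {2}"
proof
  assume a: "answer_set Q I"
  define J :: "nat set" where "J = {x. (x = 1 \<and> 2 \<notin> I) \<or> (x = 2 \<and> 1 \<notin> I)}"
  have "\<forall>r\<in>reduct Q I. closed_under J r"
    unfolding redQ closed_under_def sat_body_def sat_head_def J_def by simp
  hence sub: "I \<subseteq> J" using a unfolding answer_set_def by blast
  have "\<forall>r\<in>reduct Q I. closed_under I r" using a unfolding answer_set_def by blast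
  hence c1: "closed_under I (Some 1, {if 2 \<notin> I then ETop else EBot})"
    and c2: "closed_under I (Some 2, {if 1 \<notin> I then ETop else EBot})"
    unfolding redQ by blast+
  have c: "2 \<notin> I \<longrightarrow> 1 \<in> I" "1 \<notin> I \<longrightarrow> 2 \<in> I"
  proof (rule_tac [!] impI)
    assume h: "2 \<notin> I"
    hence "closed_under I (Some 1, {ETop})" using c1 by simp
    thus "1 \<in> I" by (simp add: closed_under_def sat_body_def sat_head_def)
  next
    assume h: "1 \<notin> I"
    hence "closed_under I (Some 2, {ETop})" using c2 by simp
    thus "2 \<in> I" by (simp add: closed_under_def sat_body_def sat_head_def)
  qed
  have m: "x \<in> I \<Longrightarrow> (x = 1 \<and> 2 \<notin> I) \<or> (x = 2 \<and> 1 \<notin> I)" for x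
    using sub unfolding J_def by auto
  have s2: "I \<subseteq> {1,2}" using m by auto
  have n: "\<not> (1 \<in> I \<and> 2 \<in> I)" using m by auto
  show "I = {1} \<or> I = {2}" using sub12[OF s2] c n by blast
next
  assume "I = {1} \<or> I = {2}"
  thus "answer_set Q I"
  proof
    assume i: "I = {1}"
    show ?thesis unfolding answer_set_def redQ closed_under_def sat_body_def sat_head_def i by simp
  next
    assume i: "I = {2}"
    show ?thesis unfolding answer_set_def redQ closed_under_def sat_body_def sat_head_def i by simp
  qed
qed

lemma compQ: "comp_model {1,2} Q I \<longleftrightarrow> ((1 \<in> I) = (2 \<notin> I))"
  by (simp add: comp_model_def Q_def cl_body_def) blast

lemma comp_set: "{I. I \<subseteq> {1, 2} \<and> comp_model {1, 2} Q I} = {{1},{2}}"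
proof (intro set_eqI iffI)
  fix I assume "I \<in> {I. I \<subseteq> {1, 2} \<and> comp_model {1, 2} Q I}"
  hence "I \<subseteq> {1,2}" "(1 \<in> I) = (2 \<notin> I)" using compQ by auto
  hence "(I = {} \<or> I = {1} \<or> I = {2} \<or> I = {1,2}) \<and> ((1 \<in> I) = (2 \<notin> I))"
    using sub12[of I] by blast
  thus "I \<in> {{1},{2}}" by (elim conjE disjE) simp_all
next
  fix I :: "nat set" assume "I \<in> {{1},{2}}"
  thus "I \<in> {I. I \<subseteq> {1, 2} \<and> comp_model {1, 2} Q I}" unfolding compQ by (elim insertE) simp_all
qed

lemma AnsQ: "Ans Q = {{1},{2}}"
  unfolding Ans_def using AnsQ_iff by auto

theorem mainTheorem9:
  fixes P2 :: program
  assumes "parity_program 2 P2"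
  shows "\<exists>P2'. canonical_program P2' \<and> var P2' \<subseteq> {1, 2} \<and>
           Ans P2' = PARITY 2 \<and> PARITY 2 = {{1}, {2}} \<and>
           Ans P2' = {I. I \<subseteq> {1, 2} \<and> comp_model {1, 2} P2' I} \<and>
           card P2' \<le> card P2"
proof (intro exI conjI)
  show "canonical_program Q" unfolding canonical_program_def Q_def by auto
  show "var Q \<subseteq> {1, 2}" unfolding var_def Q_def head_vars_def by auto
  show "Ans Q = PARITY 2" using AnsQ parity2 by simp
  show "PARITY 2 = {{1}, {2}}" by (rule parity2)
  show "Ans Q = {I. I \<subseteq> {1, 2} \<and> comp_model {1, 2} Q I}"
    unfolding AnsQ comp_set ..
  have fin: "finite P2" and A: "Ans P2 = PARITY 2"
    using assms unfolding parity_program_def canonical_program_def by auto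
  have A2: "Ans P2 = {{1},{2}}" using A parity2 by simp
  have "{1} \<in> Ans P2" "{2} \<in> Ans P2" unfolding A2 by simp_all
  hence a1: "answer_set P2 {1}" and a2: "answer_set P2 {2}" unfolding Ans_def by simp_all
  obtain B1 where "(Some 1, B1) \<in> P2" using head_exists[OF a1, of 1] by auto
  moreover obtain B2 where "(Some 2, B2) \<in> P2" using head_exists[OF a2, of 2] by auto
  ultimately have "{(Some 1, B1), (Some 2, B2)} \<subseteq> P2" by auto
  hence "card {(Some (1::nat), B1), (Some 2, B2)} \<le> card P2" using fin card_mono by blast
  moreover have "card Q = 2" unfolding Q_def by simp
  ultimately show "card Q \<le> card P2" by simp
qed

end
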